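(* Consider a Hamiltonian system $\dot{\mathbf x}=\mathbf L\nabla H(\mathbf x)$ on $\mathbb{R}^N$ with $H:\mathbb{R}^N\to\mathbb{R}$ differentiable and $\mathbf L\in\mathbb{R}^{N\times N}$ skew-symmetric. Let $\mathbf X\in\mathbb{R}^{N\times n_s}$ collect snapshots $\mathbf x(t_i)$ of a solution at times $t_i$ with time step $\Delta t$, let $\mathbf X_t$ collect approximations $\mathbf x_t(t_i)$ of $\dot{\mathbf x}(t_i)$, let $\nabla H(\mathbf X)\in\mathbb{R}^{N\times n_s}$ collect the gradients $\nabla H(\mathbf x(t_i))$, and let $\mathbf U\in\mathbb{R}^{N\times n}$ be a POD basis. Set $\hat{\mathbf X}_t=\mathbf U^\intercal\mathbf X_t$, $\hat\nabla H(\mathbf X)=\mathbf U^\intercal\nabla H(\mathbf X)$, and let $\hat{\mathbf L}\in\mathbb{R}^{n\times n}$ be the inferred operator \[\hat{\mathbf L}=\operatorname*{argmin}_{\mathbf M\in\mathbb{R}^{n\times n}}\|\hat{\mathbf X}_t-\mathbf M\hat\nabla H(\mathbf X)\|^2\quad\text{subject to}\quad\mathbf M^\intercal=-\mathbf M.\] Assume: (i) for every $\mathbf x\in\mathbb{R}^N$, $\lim_{n\to N}\|(\mathbf I-\mathbf U\mathbf U^\intercal)\mathbf x\|=0$; (ii) $\lim_{\Delta t\to0}\max_i\|\mathbf x_t(t_i)-\dot{\mathbf x}(t_i)\|=0$; (iii) $\mathbf X$ and $\nabla H(\mathbf X)$ have maximal rank. Then $\hat{\mathbf L}$ converges to the intrusive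 operator $\bar{\mathbf L}=\mathbf U^\intercal\mathbf L\mathbf U$ as $\Delta t\to0$ and $n\to N$.
   Context: A POD basis is a matrix $\mathbf U\in\mathbb{R}^{N\times n}$ whose columns are the first $n$ left singular vectors of a (possibly mean-centered) snapshot matrix, so $\mathbf U^\intercal\mathbf U=\mathbf I$. $\|\cdot\|$ is the Frobenius (or Euclidean) norm. Equivalently, $\hat{\mathbf L}$ is the solution of $(\mathbf I\otimes\mathbf G+\mathbf G\otimes\mathbf I)\operatorname{vec}\hat{\mathbf L}=\operatorname{vec}(\hat{\mathbf X}_t\hat\nabla H(\mathbf X)^\intercal-\hat\nabla H(\mathbf X)\hat{\mathbf X}_t^\intercal)$ with $\mathbf G=\hat\nabla H(\mathbf X)\hat\nabla H(\mathbf X)^\intercal$. *)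

theory Defs
  imports "HOL-Analysis.Analysis"
begin

text \<open>The full state space is real^'N with N = CARD('N).
  Matrices with n or n_s columns are represented column-wise by functions
  nat => real^'N (only indices below the relevant size matter); reduced
  (n x n, n x n_s) matrices are represented entrywise by nat => nat => real.\<close>

definition skew_mat :: "real^'N^'N \<Rightarrow> bool" where
  "skew_mat L \<longleftrightarrow> transpose L = - L"

text \<open>S S^T applied to a vector, where S has columns s 0, ..., s (ns-1).\<close>
definition gram_op :: "nat \<Rightarrow> (nat \<Rightarrow> real^'N) \<Rightarrow> real^'N \<Rightarrow> real^'N" where
  "gram_op ns s v = (\<Sum>i<ns. (s i \<bullet> v) *\<^sub>R s i)"

definition center :: "nat \<Rightarrow> (nat \<Rightarrow> real^'N) \<Rightarrow> nat \<Rightarrow> real^'N" where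
  "center ns s i = s i - (1 / real ns) *\<^sub>R (\<Sum>k<ns. s k)"

text \<open>U (columns U 0, ..., U (n-1)) is a POD basis of dimension n of the snapshot
  matrix S: its columns are orthonormal left singular vectors of S (i.e. orthonormal
  eigenvectors of S S^T) ordered by nonincreasing singular value, and they are the
  first n ones: every left singular vector orthogonal to them has singular value
  no larger than the n-th one.\<close>
definition pod_basis :: "nat \<Rightarrow> (nat \<Rightarrow> real^'N) \<Rightarrow> nat \<Rightarrow> (nat \<Rightarrow> real^'N) \<Rightarrow> bool" where
  "pod_basis ns S n U \<longleftrightarrow>
     (\<forall>j<n. \<forall>k<n. U j \<bullet> U k = (if j = k then 1 else 0)) \<and>
     (\<exists>ev::nat \<Rightarrow> real.
        (\<forall>j<n. gram_op ns S (U j) = ev j *\<^sub>R U j) \<and>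
        (\<forall>j k. j \<le> k \<and> k < n \<longrightarrow> ev k \<le> ev j) \<and>
        (\<forall>v \<mu>. v \<noteq> 0 \<and> gram_op ns S v = \<mu> *\<^sub>R v \<and> (\<forall>j<n. v \<bullet> U j = 0) \<and> 0 < n
              \<longrightarrow> \<mu> \<le> ev (n - 1)))"

definition oi_obj :: "nat \<Rightarrow> nat \<Rightarrow> (nat \<Rightarrow> nat \<Rightarrow> real) \<Rightarrow> (nat \<Rightarrow> nat \<Rightarrow> real)
                       \<Rightarrow> (nat \<Rightarrow> nat \<Rightarrow> real) \<Rightarrow> real" where
  "oi_obj n ns Xth Gh M = (\<Sum>i<ns. \<Sum>a<n. (Xth a i - (\<Sum>b<n. M a b * Gh b i))\<^sup>2)"

definition skew_red :: "nat \<Rightarrow> (nat \<Rightarrow> nat \<Rightarrow> real) \<Rightarrow> bool" where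
  "skew_red n M \<longleftrightarrow> (\<forall>a<n. \<forall>b<n. M b a = - M a b)"

definition frob :: "nat \<Rightarrow> (nat \<Rightarrow> nat \<Rightarrow> real) \<Rightarrow> real" where
  "frob n M = sqrt (\<Sum>a<n. \<Sum>b<n. (M a b)\<^sup>2)"

end

theory Submission imports Defs begin

lemma orth_norm:
  fixes u :: "nat \<Rightarrow> real^'N"
  assumes orth: "\<forall>j<n. \<forall>k<n. u j \<bullet> u k = (if j = k then 1 else 0)"
  shows "(\<Sum>b<n. d b *\<^sub>R u b) \<bullet> (\<Sum>b<n. d b *\<^sub>R u b) = (\<Sum>b<n. (d b)\<^sup>2)"
proof -
  have "(\<Sum>b<n. d b *\<^sub>R u b) \<bullet> (\<Sum>c<n. d c *\<^sub>R u c) = (\<Sum>b<n. \<Sum>c<n. d b * d c * (u b \<bullet> u c))"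
    apply (simp add: inner_sum_left inner_sum_right sum_distrib_left mult.assoc)
    apply (subst sum.swap) apply (simp add: mult.left_commute)
    done
  also have "\<dots> = (\<Sum>b<n. \<Sum>c<n. d b * d c * (if b = c then 1 else 0))"
    using orth by (intro sum.cong refl) auto
  also have "\<dots> = (\<Sum>b<n. (d b)\<^sup>2)"
    by (simp add: power2_eq_square if_distrib cong: if_cong)
  finally show ?thesis .
qed

lemma skew_inner:
  assumes "skew_mat L"
  shows "y \<bullet> (L *v z) = - (z \<bullet> (L *v y))"
proof -
  have "y \<bullet> (L *v z) = (y v* L) \<bullet> z" by (simp add: dot_lmul_matrix)
  also have "y v* L = transpose L *v y" by simp
  also have "\<dots> = - (L *v y)" using assms unfolding skew_mat_def
    by (simp add: matrix_vector_mult_def vec_eq_iff sum_negf)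
  finally show ?thesis by (simp add: inner_commute)
qed

lemma lower_bound:
  fixes g :: "nat \<Rightarrow> real^'N"
  assumes "span (g ` {..<ns}) = UNIV"
  shows "\<exists>c>0. \<forall>w. c * (w \<bullet> w) \<le> (\<Sum>i<ns. (w \<bullet> g i)\<^sup>2)"
proof -
  define q where "q w = (\<Sum>i<ns. (w \<bullet> g i)\<^sup>2)" for w :: "real^'N"
  have cont: "continuous_on (sphere 0 1) q" unfolding q_def
    by (intro continuous_intros)
  obtain b :: "real^'N" where b: "b \<in> Basis" using nonempty_Basis by blast
  have ne: "sphere (0::real^'N) 1 \<noteq> {}" using b by (auto intro!: exI[of _ b])
  obtain w0 where w0: "w0 \<in> sphere 0 1" "\<forall>y\<in>sphere 0 1. q w0 \<le> q y"
    using continuous_attains_inf[OF compact_sphere ne cont] by blast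
  have qnn: "q w \<ge> 0" for w unfolding q_def by (intro sum_nonneg) auto
  have pos: "q w0 > 0"
  proof (rule ccontr)
    assume "\<not> q w0 > 0"
    then have "q w0 = 0" using qnn[of w0] by linarith
    then have "\<forall>i\<in>{..<ns}. (w0 \<bullet> g i)\<^sup>2 = 0" unfolding q_def
      by (subst sum_nonneg_eq_0_iff[symmetric]) auto
    then have "\<And>y. y \<in> g ` {..<ns} \<Longrightarrow> orthogonal w0 y" by (auto simp: orthogonal_def)
    then have "orthogonal w0 w0" using orthogonal_to_span[of w0 "g ` {..<ns}" w0] assms by auto
    then show False using w0(1) by (auto simp: orthogonal_def)
  qed
  have "q w0 * (w \<bullet> w) \<le> q w" for w
  proof (cases "w = 0")
    case True then show ?thesis by (simp add: qnn)
  next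
    case False
    define v where "v = (1 / norm w) *\<^sub>R w"
    have "v \<in> sphere 0 1" using False by (simp add: v_def)
    then have "q w0 \<le> q v" using w0 by blast
    also have "q v = q w / (norm w)\<^sup>2" unfolding q_def v_def
      by (simp add: sum_divide_distrib power_divide)
    finally have "q w0 * (norm w)\<^sup>2 \<le> q w" using False by (simp add: field_simps)
    then show ?thesis by (simp add: power2_norm_eq_inner)
  qed
  then show ?thesis using pos unfolding q_def by blast
qed



theorem theorem2:
  fixes H :: "real^'N \<Rightarrow> real" and gradH :: "real^'N \<Rightarrow> real^'N"
    and L :: "real^'N^'N"
    and x :: "real \<Rightarrow> real^'N"
    and ns :: nat and t :: "nat \<Rightarrow> real"
    and xt :: "real \<Rightarrow> nat \<Rightarrow> real^'N"
    and S :: "nat \<Rightarrow> real^'N"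
    and U :: "nat \<Rightarrow> nat \<Rightarrow> real^'N"
    and Lhat :: "real \<Rightarrow> nat \<Rightarrow> nat \<Rightarrow> nat \<Rightarrow> real"
  assumes grad: "\<And>y. (H has_derivative (\<lambda>v. gradH y \<bullet> v)) (at y)"
    and skew: "skew_mat L"
    and sol: "\<And>\<tau>. (x has_vector_derivative (L *v gradH (x \<tau>))) (at \<tau>)"
    and snap: "S = (\<lambda>i. x (t i)) \<or> S = center ns (\<lambda>i. x (t i))"
    and pod: "\<And>n. n \<le> CARD('N) \<Longrightarrow> pod_basis ns S n (U n)"
    and inferred: "\<And>h n. 0 < h \<Longrightarrow> n \<le> CARD('N) \<Longrightarrow>
        skew_red n (Lhat h n) \<and>
        (\<forall>M. skew_red n M \<longrightarrow>
           oi_obj n ns (\<lambda>a i. U n a \<bullet> xt h i) (\<lambda>b i. U n b \<bullet> gradH (x (t i))) (Lhat h n)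
           \<le> oi_obj n ns (\<lambda>a i. U n a \<bullet> xt h i) (\<lambda>b i. U n b \<bullet> gradH (x (t i))) M)"
    and basis_conv: "\<And>y e. 0 < e \<Longrightarrow> \<exists>n0\<le>CARD('N). \<forall>n. n0 \<le> n \<and> n \<le> CARD('N) \<longrightarrow>
        norm (y - (\<Sum>j<n. (U n j \<bullet> y) *\<^sub>R U n j)) < e"
    and deriv_conv: "((\<lambda>h. Max ((\<lambda>i. norm (xt h i - vector_derivative x (at (t i)))) ` {..<ns}))
                       \<longlongrightarrow> 0) (at_right 0)"
    and rankX: "dim (span ((\<lambda>i. x (t i)) ` {..<ns})) = CARD('N)"
    and rankG: "dim (span ((\<lambda>i. gradH (x (t i))) ` {..<ns})) = CARD('N)"
  shows "\<forall>e>0. \<exists>\<delta>>0. \<exists>n0\<le>CARD('N). \<forall>h n. 0 < h \<and> h < \<delta> \<and> n0 \<le> n \<and> n \<le> CARD('N) \<longrightarrow>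
           frob n (\<lambda>a b. Lhat h n a b - U n a \<bullet> (L *v U n b)) < e"
proof -
  define N where "N = CARD('N)"
  define u where "u = U N"
  define g where "g i = gradH (x (t i))" for i
  define m where "m h = Max ((\<lambda>i. norm (xt h i - vector_derivative x (at (t i)))) ` {..<ns})" for h
  have orth: "\<forall>j<N. \<forall>k<N. u j \<bullet> u k = (if j = k then 1 else 0)"
    using pod[of N] unfolding u_def N_def pod_basis_def by auto
  have expand: "y = (\<Sum>j<N. (u j \<bullet> y) *\<^sub>R u j)" for y
  proof -
    have "norm (y - (\<Sum>j<N. (u j \<bullet> y) *\<^sub>R u j)) < e" if epos: "e > 0" for e
    proof -
      obtain n0 where "n0 \<le> CARD('N)" "\<forall>n. n0 \<le> n \<and> n \<le> CARD('N) \<longrightarrow>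
        norm (y - (\<Sum>j<n. (U n j \<bullet> y) *\<^sub>R U n j)) < e" using basis_conv[OF epos] by blast
      then show ?thesis unfolding u_def N_def by auto
    qed
    then have "norm (y - (\<Sum>j<N. (u j \<bullet> y) *\<^sub>R u j)) = 0"
      by (metis less_irrefl norm_ge_zero order_less_le)
    then show ?thesis by simp
  qed
  have parseval: "(\<Sum>a<N. (u a \<bullet> y)\<^sup>2) = y \<bullet> y" for y
    using orth_norm[OF orth, of "\<lambda>j. u j \<bullet> y"] expand[of y, symmetric] by simp
  have vd: "vector_derivative x (at (t i)) = L *v g i" for i
    unfolding g_def by (rule vector_derivative_at[OF sol])
  have "span (g ` {..<ns}) = UNIV"
    using rankG dim_eq_full[of "(\<lambda>i. gradH (x (t i))) ` {..<ns}"] unfolding g_def by simp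
  then obtain c where c: "c > 0" "\<And>w. c * (w \<bullet> w) \<le> (\<Sum>i<ns. (w \<bullet> g i)\<^sup>2)"
    using lower_bound by blast
  define Lbar where "Lbar a b = u a \<bullet> (L *v u b)" for a b
  have Lbar_skew: "skew_red N Lbar"
    unfolding skew_red_def Lbar_def by (intro allI impI skew_inner[OF skew])
  have Lbar_app: "(\<Sum>b<N. Lbar a b * (u b \<bullet> g i)) = u a \<bullet> (L *v g i)" for a i
  proof -
    have "u a \<bullet> (L *v g i) = (u a v* L) \<bullet> g i" by (simp add: dot_lmul_matrix)
    also have "\<dots> = (u a v* L) \<bullet> (\<Sum>b<N. (u b \<bullet> g i) *\<^sub>R u b)" using expand[of "g i"] by simp
    also have "\<dots> = (\<Sum>b<N. (u b \<bullet> g i) * ((u a v* L) \<bullet> u b))" by (simp add: inner_sum_right)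
    also have "\<dots> = (\<Sum>b<N. Lbar a b * (u b \<bullet> g i))"
      unfolding Lbar_def by (simp add: dot_lmul_matrix mult.commute)
    finally show ?thesis by simp
  qed
  have mge: "norm (xt h i - L *v g i) \<le> m h" if "i < ns" for h i
    unfolding m_def vd[symmetric] using that by (intro Max_ge) auto
  have key: "(\<Sum>a<N. \<Sum>b<N. (Lhat h N a b - Lbar a b)\<^sup>2) \<le> 4 * real ns * (m h)\<^sup>2 / c"
    if h: "0 < h" for h
  proof -
    define Xth where "Xth a i = u a \<bullet> xt h i" for a i
    define Gh where "Gh b i = u b \<bullet> g i" for b i
    define R where "R M a i = Xth a i - (\<Sum>b<N. M a b * Gh b i)" for M a i
    have objR: "oi_obj N ns Xth Gh M = (\<Sum>i<ns. \<Sum>a<N. (R M a i)\<^sup>2)" for M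
      unfolding oi_obj_def R_def by simp
    have opt: "oi_obj N ns Xth Gh (Lhat h N) \<le> oi_obj N ns Xth Gh Lbar"
      using inferred[OF h, of N] Lbar_skew unfolding Xth_def Gh_def g_def u_def N_def by auto
    have RLbar: "R Lbar a i = u a \<bullet> (xt h i - L *v g i)" for a i
      unfolding R_def Xth_def Gh_def Lbar_app by (simp add: inner_diff_right)
    have "oi_obj N ns Xth Gh Lbar = (\<Sum>i<ns. (norm (xt h i - L *v g i))\<^sup>2)"
      unfolding objR RLbar parseval by (simp add: power2_norm_eq_inner)
    also have "\<dots> \<le> (\<Sum>i<ns. (m h)\<^sup>2)"
      by (intro sum_mono power_mono mge) auto
    finally have objLbar: "oi_obj N ns Xth Gh Lbar \<le> real ns * (m h)\<^sup>2" by simp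
    define D where "D a b = Lhat h N a b - Lbar a b" for a b
    define w where "w a = (\<Sum>b<N. D a b *\<^sub>R u b)" for a
    have wg: "w a \<bullet> g i = R Lbar a i - R (Lhat h N) a i" for a i
      unfolding w_def R_def D_def Gh_def
      by (simp add: inner_sum_left algebra_simps sum_subtractf)
    have "c * (\<Sum>a<N. \<Sum>b<N. (D a b)\<^sup>2) = (\<Sum>a<N. c * (w a \<bullet> w a))"
      unfolding w_def orth_norm[OF orth] by (simp add: sum_distrib_left)
    also have "\<dots> \<le> (\<Sum>a<N. \<Sum>i<ns. (w a \<bullet> g i)\<^sup>2)"
      by (intro sum_mono c(2))
    also have "\<dots> = (\<Sum>i<ns. \<Sum>a<N. (R Lbar a i - R (Lhat h N) a i)\<^sup>2)"
      unfolding wg by (rule sum.swap)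
    also have "\<dots> \<le> (\<Sum>i<ns. \<Sum>a<N. 2 * (R Lbar a i)\<^sup>2 + 2 * (R (Lhat h N) a i)\<^sup>2)"
    proof (intro sum_mono)
      fix i a
      have "0 \<le> (R Lbar a i + R (Lhat h N) a i)\<^sup>2" by simp
      then show "(R Lbar a i - R (Lhat h N) a i)\<^sup>2 \<le> 2 * (R Lbar a i)\<^sup>2 + 2 * (R (Lhat h N) a i)\<^sup>2"
        by (simp add: power2_eq_square algebra_simps)
    qed
    also have "\<dots> = 2 * oi_obj N ns Xth Gh Lbar + 2 * oi_obj N ns Xth Gh (Lhat h N)"
      unfolding objR by (simp add: sum.distrib sum_distrib_left)
    also have "\<dots> \<le> 4 * (real ns * (m h)\<^sup>2)" using opt objLbar by linarith
    finally have "c * (\<Sum>a<N. \<Sum>b<N. (D a b)\<^sup>2) \<le> 4 * real ns * (m h)\<^sup>2" by simp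
    then show ?thesis using c(1) unfolding D_def by (simp add: field_simps)
  qed
  have lim: "((\<lambda>h. 4 * real ns * (m h)\<^sup>2 / c) \<longlongrightarrow> 4 * real ns * 0\<^sup>2 / c) (at_right 0)"
    using deriv_conv c(1) unfolding m_def[symmetric] by (intro tendsto_intros) auto
  show ?thesis
  proof (intro allI impI)
    fix e :: real assume e: "e > 0"
    have "eventually (\<lambda>h. 4 * real ns * (m h)\<^sup>2 / c < e\<^sup>2) (at_right 0)"
      using lim e by (intro order_tendstoD) auto
    then obtain b where b: "b > 0" "\<And>h. h > 0 \<Longrightarrow> h < b \<Longrightarrow> 4 * real ns * (m h)\<^sup>2 / c < e\<^sup>2"
      unfolding eventually_at_right_field by auto
    show "\<exists>\<delta>>0. \<exists>n0\<le>CARD('N). \<forall>h n. 0 < h \<and> h < \<delta> \<and> n0 \<le> n \<and> n \<le> CARD('N) \<longrightarrow>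
           frob n (\<lambda>a b. Lhat h n a b - U n a \<bullet> (L *v U n b)) < e"
    proof (intro exI[of _ b] conjI b(1) exI[of _ N] allI impI)
      show "N \<le> CARD('N)" by (simp add: N_def)
      fix h n assume hn: "0 < h \<and> h < b \<and> N \<le> n \<and> n \<le> CARD('N)"
      then have n: "n = N" by (simp add: N_def)
      have "(\<Sum>a<N. \<Sum>b<N. (Lhat h N a b - Lbar a b)\<^sup>2) < e\<^sup>2"
        using key[of h] b(2)[of h] hn by linarith
      then have "sqrt (\<Sum>a<N. \<Sum>b<N. (Lhat h N a b - Lbar a b)\<^sup>2) < sqrt (e\<^sup>2)"
        by (subst real_sqrt_less_iff) simp
      then show "frob n (\<lambda>a b. Lhat h n a b - U n a \<bullet> (L *v U n b)) < e"
        unfolding n frob_def using e by (simp add: Lbar_def u_def)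
    qed
  qed
qed


end
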